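(* Let $\sigma : X^* \to M$ be a monoid choice of generators for a right cancellative monoid $M$. Then the loop automaton of $M$ with respect to $\sigma$ is the minimal automaton of the loop problem $L_\sigma(M)$.
   Context: Maps are written on the right. $X^*$ is the free monoid on $X$; a choice of generators is a surjective monoid morphism. Let $\overline{X} = \{\overline{x} : x \in X\}$ be new symbols, $\hat{X} = X \cup \overline{X}$. The loop automaton of $M$ w.r.t. $\sigma$ is the automaton over $\hat{X}$ with state set $M$, for each $a \in M$, $x \in X$ an edge $a \to a(x\sigma)$ labelled $x$ and an edge $a(x\sigma) \to a$ labelled $\overline{x}$, with start state and unique terminal state the identity of $M$; the loop problem $L_\sigma(M)$ is the language it accepts. An automaton (possibly infinite) is deterministic if edges are labelled by single letters and each state has at most one outgoing edge with each letter; trim if every state is reachable from the start state and can reach a terminal state. The cone of a state is the set of words labelling paths from it to a terminal state. The minimal automaton of a language $L$ is the unique (up to label-, start- and terminal-preserving isomorphism) deterministic trim automaton accepting $L$ in which no two distinct states have the same cone. *)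

theory Defs
  imports Main
begin

text \<open>A (possibly infinite) automaton over the alphabet 'a with states of type 's.
  Edges are labelled by words over the alphabet (so that "deterministic" has content).\<close>
record ('s, 'a) automaton =
  states :: "'s set"
  edges :: "('s \<times> 'a list \<times> 's) set"
  start :: 's
  terminals :: "'s set"

inductive path :: "('s, 'a) automaton \<Rightarrow> 's \<Rightarrow> 'a list \<Rightarrow> 's \<Rightarrow> bool"
  for A where
  path_nil: "p \<in> states A \<Longrightarrow> path A p [] p"
| path_step: "(p, u, q) \<in> edges A \<Longrightarrow> path A q w r \<Longrightarrow> path A p (u @ w) r"

definition wf_automaton :: "('s, 'a) automaton \<Rightarrow> bool" where
  "wf_automaton A \<longleftrightarrow> start A \<in> states A \<and> terminals A \<subseteq> states A \<and>
     (\<forall>(p, u, q) \<in> edges A. p \<in> states A \<and> q \<in> states A)"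

definition cone :: "('s, 'a) automaton \<Rightarrow> 's \<Rightarrow> 'a list set" where
  "cone A q = {w. \<exists>t \<in> terminals A. path A q w t}"

definition accepted_language :: "('s, 'a) automaton \<Rightarrow> 'a list set" where
  "accepted_language A = cone A (start A)"

definition deterministic :: "('s, 'a) automaton \<Rightarrow> bool" where
  "deterministic A \<longleftrightarrow>
     (\<forall>(p, u, q) \<in> edges A. length u = 1) \<and>
     (\<forall>p a q q'. (p, [a], q) \<in> edges A \<and> (p, [a], q') \<in> edges A \<longrightarrow> q = q')"

definition trim :: "('s, 'a) automaton \<Rightarrow> bool" where
  "trim A \<longleftrightarrow> (\<forall>q \<in> states A. (\<exists>w. path A (start A) w q) \<and> cone A q \<noteq> {})"

definition is_minimal_automaton_of :: "('s, 'a) automaton \<Rightarrow> 'a list set \<Rightarrow> bool" where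
  "is_minimal_automaton_of A L \<longleftrightarrow> wf_automaton A \<and> deterministic A \<and> trim A \<and>
     accepted_language A = L \<and> inj_on (cone A) (states A)"

definition choice_of_generators :: "('x list \<Rightarrow> 'm::monoid_mult) \<Rightarrow> bool" where
  "choice_of_generators \<sigma> \<longleftrightarrow> \<sigma> [] = 1 \<and> (\<forall>u v. \<sigma> (u @ v) = \<sigma> u * \<sigma> v) \<and> surj \<sigma>"

definition right_cancellative :: "'m::monoid_mult itself \<Rightarrow> bool" where
  "right_cancellative _ \<longleftrightarrow> (\<forall>a b c :: 'm. a * c = b * c \<longrightarrow> a = b)"

text \<open>Hat X = X \<union> overline X, encoded as 'x + 'x: Inl x is x, Inr x is overline x.
  Maps are written on the right, so a(x\<sigma>) is a * \<sigma> [x].\<close>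
definition loop_automaton :: "('x list \<Rightarrow> 'm::monoid_mult) \<Rightarrow> ('m, 'x + 'x) automaton" where
  "loop_automaton \<sigma> = \<lparr> states = UNIV,
     edges = {(a, [Inl x], a * \<sigma> [x]) | a x. True} \<union> {(a * \<sigma> [x], [Inr x], a) | a x. True},
     start = 1, terminals = {1} \<rparr>"

definition loop_problem :: "('x list \<Rightarrow> 'm::monoid_mult) \<Rightarrow> ('x + 'x) list set" where
  "loop_problem \<sigma> = accepted_language (loop_automaton \<sigma>)"

end

theory Submission
  imports Defs
begin

lemma hom_cons:
  assumes "choice_of_generators \<sigma>"
  shows "\<sigma> (x # w) = \<sigma> [x] * \<sigma> w" and "\<sigma> [] = 1" and "\<sigma> (u @ v) = \<sigma> u * \<sigma> v"
  using assms unfolding choice_of_generators_def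
  by (metis append_Cons append_Nil)+

lemma fwd_path:
  assumes "choice_of_generators \<sigma>"
  shows "path (loop_automaton \<sigma>) a (map Inl w) (a * \<sigma> w)"
proof (induction w arbitrary: a)
  case Nil
  then show ?case using hom_cons(2)[OF assms]
    by (simp add: path_nil loop_automaton_def)
next
  case (Cons x w)
  have e: "(a, [Inl x], a * \<sigma> [x]) \<in> edges (loop_automaton \<sigma>)"
    by (auto simp: loop_automaton_def)
  have "path (loop_automaton \<sigma>) a ([Inl x] @ map Inl w) (a * \<sigma> [x] * \<sigma> w)"
    by (rule path_step[OF e Cons.IH])
  then show ?case using hom_cons(1)[OF assms, of x w] by (simp add: mult.assoc)
qed

lemma bwd_path:
  assumes "choice_of_generators \<sigma>"
  shows "path (loop_automaton \<sigma>) (a * \<sigma> w) (map Inr (rev w)) a"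
proof (induction w rule: rev_induct)
  case Nil
  then show ?case using hom_cons(2)[OF assms]
    by (simp add: path_nil loop_automaton_def)
next
  case (snoc x w)
  have e: "((a * \<sigma> w) * \<sigma> [x], [Inr x], a * \<sigma> w) \<in> edges (loop_automaton \<sigma>)"
    by (auto simp: loop_automaton_def)
  have "path (loop_automaton \<sigma>) ((a * \<sigma> w) * \<sigma> [x]) ([Inr x] @ map Inr (rev w)) a"
    by (rule path_step[OF e snoc.IH])
  then show ?case using hom_cons(3)[OF assms, of w "[x]"] by (simp add: mult.assoc)
qed

lemma inr_path:
  assumes "choice_of_generators \<sigma>"
  shows "path (loop_automaton \<sigma>) p v q \<Longrightarrow> v = map Inr u \<Longrightarrow> p = q * \<sigma> (rev u)"
proof (induction p v q arbitrary: u rule: path.induct)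
  case (path_nil p)
  then show ?case using hom_cons(2)[OF assms] by simp
next
  case (path_step p e q' w r)
  from path_step.hyps(1) consider (l) x where "e = [Inl x]" "q' = p * \<sigma> [x]"
    | (r) x where "e = [Inr x]" "p = q' * \<sigma> [x]"
    by (auto simp: loop_automaton_def)
  then show ?case
  proof cases
    case l
    then show ?thesis using path_step.prems by (cases u) auto
  next
    case r
    then obtain u' where u: "u = x # u'" "w = map Inr u'" using path_step.prems by (cases u) auto
    then have "q' = r * \<sigma> (rev u')" using path_step.IH by blast
    then show ?thesis using r u hom_cons(3)[OF assms, of "rev u'" "[x]"] by (simp add: mult.assoc)
  qed
qed

theorem proposition7p1:
  fixes \<sigma> :: "'x list \<Rightarrow> 'm::monoid_mult"
  assumes "choice_of_generators \<sigma>"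
    and "right_cancellative TYPE('m)"
  shows "is_minimal_automaton_of (loop_automaton \<sigma>) (loop_problem \<sigma>)"
proof -
  let ?A = "loop_automaton \<sigma>"
  have surj: "surj \<sigma>" using assms(1) by (simp add: choice_of_generators_def)
  have rc: "\<And>a b c :: 'm. a * c = b * c \<Longrightarrow> a = b"
    using assms(2) unfolding right_cancellative_def by blast
  have wf: "wf_automaton ?A" by (simp add: wf_automaton_def loop_automaton_def)
  have det: "deterministic ?A"
    unfolding deterministic_def
  proof (intro conjI allI impI)
    show "\<forall>(p, u, q)\<in>edges ?A. length u = 1" by (auto simp: loop_automaton_def)
  next
    fix p a q q'
    assume "(p, [a], q) \<in> edges ?A \<and> (p, [a], q') \<in> edges ?A"
    then show "q = q'" by (auto simp: loop_automaton_def dest: rc)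
  qed
  have cone_in: "map Inr (rev w) \<in> cone ?A (\<sigma> w)" for w
    using bwd_path[OF assms(1), of 1 w] by (simp add: cone_def loop_automaton_def)
  have trim: "trim ?A"
    unfolding trim_def
  proof
    fix q assume "q \<in> states ?A"
    obtain w where w: "q = \<sigma> w" using surj by (metis surjD)
    have "path ?A (start ?A) (map Inl w) q"
      using fwd_path[OF assms(1), of 1 w] w by (simp add: loop_automaton_def)
    moreover have "cone ?A q \<noteq> {}" using cone_in[of w] w by auto
    ultimately show "(\<exists>w. path ?A (start ?A) w q) \<and> cone ?A q \<noteq> {}" by blast
  qed
  have inj: "inj_on (cone ?A) (states ?A)"
  proof (rule inj_onI)
    fix a b assume "a \<in> states ?A" "b \<in> states ?A" and eq: "cone ?A a = cone ?A b"
    obtain w where w: "a = \<sigma> w" using surj by (metis surjD)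
    have "map Inr (rev w) \<in> cone ?A b" using cone_in[of w] w eq by simp
    then obtain t where "t \<in> terminals ?A" "path ?A b (map Inr (rev w)) t"
      by (auto simp: cone_def)
    then have "t = 1" by (simp add: loop_automaton_def)
    with \<open>path ?A b (map Inr (rev w)) t\<close> have "b = t * \<sigma> (rev (rev w))"
      using inr_path[OF assms(1)] by blast
    with \<open>t = 1\<close> have "b = 1 * \<sigma> (rev (rev w))" by simp
    then show "a = b" using w by simp
  qed
  show ?thesis using wf det trim inj
    by (simp add: is_minimal_automaton_of_def loop_problem_def)
qed

end
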